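(* Let $G$ be a nonempty $L^0$-convex subset of $L^0$ (with the topology of convergence in probability). If $G$ is $L^0$-convexly compact, then $G$ is almost surely bounded (there is $\xi\in L^0_+$ with $|g|\le\xi$ for all $g\in G$) and closed.
   Context: $(\Omega,\mathcal{F},P)$ is a probability space; $L^0$ denotes the set of equivalence classes (modulo $P$-a.s. equality) of real-valued $\mathcal{F}$-measurable random variables, endowed with the topology of convergence in probability and the a.s. partial order; $L^0_+=\{\xi\in L^0:\xi\ge0\}$. A subset $G\subset L^0$ is $L^0$-convex if $\xi x+(1-\xi)y\in G$ for all $x,y\in G$ and all $\xi\in L^0$ with $0\le\xi\le1$. An $L^0$-convex set $G$ is $L^0$-convexly compact if every family of $L^0$-convex subsets of $G$ which are closed (in the relative topology of $G$) and which has the finite intersection property has nonempty intersection. *)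

theory Defs
  imports "HOL-Probability.Probability"
begin

text \<open>Elements of L^0 are represented by real-valued measurable functions (representatives);
  a set of equivalence classes corresponds to a set of representatives that is saturated
  under almost-sure equality.\<close>

definition L0_saturated :: "'a measure \<Rightarrow> ('a \<Rightarrow> real) set \<Rightarrow> bool" where
  "L0_saturated M G \<longleftrightarrow> G \<subseteq> borel_measurable M \<and>
     (\<forall>f\<in>G. \<forall>g\<in>borel_measurable M. (AE x in M. f x = g x) \<longrightarrow> g \<in> G)"

definition L0_top :: "'a measure \<Rightarrow> ('a \<Rightarrow> real) topology" where
  "L0_top M = topology (\<lambda>U. U \<subseteq> borel_measurable M \<and>
     (\<forall>f\<in>U. \<exists>e>0. \<exists>d>0. \<forall>g\<in>borel_measurable M.
        measure M {x\<in>space M. e < \<bar>f x - g x\<bar>} < d \<longrightarrow> g \<in> U))"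

definition L0_convex :: "'a measure \<Rightarrow> ('a \<Rightarrow> real) set \<Rightarrow> bool" where
  "L0_convex M G \<longleftrightarrow> (\<forall>x\<in>G. \<forall>y\<in>G. \<forall>\<xi>\<in>borel_measurable M.
     (AE w in M. 0 \<le> \<xi> w \<and> \<xi> w \<le> 1) \<longrightarrow>
     (\<lambda>w. \<xi> w * x w + (1 - \<xi> w) * y w) \<in> G)"

definition L0_convexly_compact :: "'a measure \<Rightarrow> ('a \<Rightarrow> real) set \<Rightarrow> bool" where
  "L0_convexly_compact M G \<longleftrightarrow> L0_convex M G \<and>
     (\<forall>\<F>. (\<forall>C\<in>\<F>. C \<subseteq> G \<and> L0_convex M C \<and> closedin (subtopology (L0_top M) G) C) \<longrightarrow>
          (\<forall>\<G>. \<G> \<subseteq> \<F> \<and> finite \<G> \<and> \<G> \<noteq> {} \<longrightarrow> \<Inter>\<G> \<noteq> {}) \<longrightarrow>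
          \<Inter>\<F> \<noteq> {})"

end

theory Submission imports Defs begin

lemma L0_istop:
  assumes P: "prob_space M"
  shows "istopology (\<lambda>U::('a \<Rightarrow> real) set. U \<subseteq> borel_measurable M \<and>
     (\<forall>f\<in>U. \<exists>e>0. \<exists>d>0. \<forall>g\<in>borel_measurable M.
        measure M {x\<in>space M. e < \<bar>f x - g x\<bar>} < d \<longrightarrow> g \<in> U))"
  unfolding istopology_def
proof (rule conjI; (intro allI impI)?)
  fix S T :: "('a \<Rightarrow> real) set"
  assume S: "S \<subseteq> borel_measurable M \<and> (\<forall>f\<in>S. \<exists>e>0. \<exists>d>0. \<forall>g\<in>borel_measurable M.
        measure M {x\<in>space M. e < \<bar>f x - g x\<bar>} < d \<longrightarrow> g \<in> S)"
    and T: "T \<subseteq> borel_measurable M \<and> (\<forall>f\<in>T. \<exists>e>0. \<exists>d>0. \<forall>g\<in>borel_measurable M.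
        measure M {x\<in>space M. e < \<bar>f x - g x\<bar>} < d \<longrightarrow> g \<in> T)"
  show "S \<inter> T \<subseteq> borel_measurable M \<and> (\<forall>f\<in>S \<inter> T. \<exists>e>0. \<exists>d>0. \<forall>g\<in>borel_measurable M.
        measure M {x\<in>space M. e < \<bar>f x - g x\<bar>} < d \<longrightarrow> g \<in> S \<inter> T)"
  proof (intro conjI ballI)
    show "S \<inter> T \<subseteq> borel_measurable M" using S by blast
    fix f assume f: "f \<in> S \<inter> T"
    then have fm: "f \<in> borel_measurable M" using S by blast
    obtain e1 d1 where e1: "e1 > 0" "d1 > 0" and h1: "\<forall>g\<in>borel_measurable M.
        measure M {x\<in>space M. e1 < \<bar>f x - g x\<bar>} < d1 \<longrightarrow> g \<in> S" using S f by blast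
    obtain e2 d2 where e2: "e2 > 0" "d2 > 0" and h2: "\<forall>g\<in>borel_measurable M.
        measure M {x\<in>space M. e2 < \<bar>f x - g x\<bar>} < d2 \<longrightarrow> g \<in> T" using T f by blast
    show "\<exists>e>0. \<exists>d>0. \<forall>g\<in>borel_measurable M.
        measure M {x\<in>space M. e < \<bar>f x - g x\<bar>} < d \<longrightarrow> g \<in> S \<inter> T"
    proof (intro exI conjI ballI impI)
      show "min e1 e2 > 0" "min d1 d2 > 0" using e1 e2 by auto
      fix g assume gm: "g \<in> borel_measurable M"
        and lt: "measure M {x\<in>space M. min e1 e2 < \<bar>f x - g x\<bar>} < min d1 d2"
      have ms: "{x\<in>space M. min e1 e2 < \<bar>f x - g x\<bar>} \<in> sets M" using fm gm by measurable
      have "measure M {x\<in>space M. e1 < \<bar>f x - g x\<bar>} \<le> measure M {x\<in>space M. min e1 e2 < \<bar>f x - g x\<bar>}"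
        by (rule finite_measure.finite_measure_mono[OF prob_space.finite_measure[OF P] _ ms]) auto
      then have "g \<in> S" using h1 gm lt by auto
      moreover have "measure M {x\<in>space M. e2 < \<bar>f x - g x\<bar>} \<le> measure M {x\<in>space M. min e1 e2 < \<bar>f x - g x\<bar>}"
        by (rule finite_measure.finite_measure_mono[OF prob_space.finite_measure[OF P] _ ms]) auto
      then have "g \<in> T" using h2 gm lt by auto
      ultimately show "g \<in> S \<inter> T" by blast
    qed
  qed
next
  fix K :: "('a \<Rightarrow> real) set set"
  assume K: "\<forall>U\<in>K. U \<subseteq> borel_measurable M \<and> (\<forall>f\<in>U. \<exists>e>0. \<exists>d>0. \<forall>g\<in>borel_measurable M.
        measure M {x\<in>space M. e < \<bar>f x - g x\<bar>} < d \<longrightarrow> g \<in> U)"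
  show "\<Union>K \<subseteq> borel_measurable M \<and> (\<forall>f\<in>\<Union>K. \<exists>e>0. \<exists>d>0. \<forall>g\<in>borel_measurable M.
        measure M {x\<in>space M. e < \<bar>f x - g x\<bar>} < d \<longrightarrow> g \<in> \<Union>K)"
  proof (intro conjI ballI)
    show "\<Union>K \<subseteq> borel_measurable M" using K by blast
    fix f assume "f \<in> \<Union>K"
    then obtain U where U: "U \<in> K" "f \<in> U" by blast
    then obtain e d where "e > 0" "d > 0" "\<forall>g\<in>borel_measurable M.
        measure M {x\<in>space M. e < \<bar>f x - g x\<bar>} < d \<longrightarrow> g \<in> U" using K by blast
    then show "\<exists>e>0. \<exists>d>0. \<forall>g\<in>borel_measurable M.
        measure M {x\<in>space M. e < \<bar>f x - g x\<bar>} < d \<longrightarrow> g \<in> \<Union>K" using U by blast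
  qed
qed

lemma openin_L0:
  assumes "prob_space M"
  shows "openin (L0_top M) U \<longleftrightarrow> U \<subseteq> borel_measurable M \<and>
     (\<forall>f\<in>U. \<exists>e>0. \<exists>d>0. \<forall>g\<in>borel_measurable M.
        measure M {x\<in>space M. e < \<bar>f x - g x\<bar>} < d \<longrightarrow> g \<in> U)"
  unfolding L0_top_def by (simp only: topology_inverse'[OF L0_istop[OF assms]])

lemma topspace_L0:
  assumes "prob_space M"
  shows "topspace (L0_top M) = borel_measurable M"
proof -
  have "openin (L0_top M) (borel_measurable M)"
    unfolding openin_L0[OF assms] by (auto intro!: exI[of _ 1])
  then have "borel_measurable M \<subseteq> topspace (L0_top M)" by (rule openin_subset)
  moreover have "topspace (L0_top M) \<subseteq> borel_measurable M"
    unfolding topspace_def using openin_L0[OF assms] by blast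
  ultimately show ?thesis by blast
qed

lemma closedin_L0:
  assumes "prob_space M"
  shows "closedin (L0_top M) S \<longleftrightarrow> S \<subseteq> borel_measurable M \<and>
     (\<forall>f\<in>borel_measurable M - S. \<exists>e>0. \<exists>d>0. \<forall>g\<in>borel_measurable M.
        measure M {x\<in>space M. e < \<bar>f x - g x\<bar>} < d \<longrightarrow> g \<notin> S)"
  unfolding closedin_def topspace_L0[OF assms] openin_L0[OF assms] by auto

lemma closed_half:
  assumes P: "prob_space M" and A: "A \<in> sets M" and phi[measurable]: "\<phi> \<in> borel_measurable M"
    and c: "\<bar>c\<bar> = (1::real)"
  shows "closedin (L0_top M) {g \<in> borel_measurable M. AE x in M. x \<in> A \<longrightarrow> \<phi> x \<le> c * g x}"
    (is "closedin _ ?D")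
  unfolding closedin_L0[OF P]
proof (intro conjI ballI)
  interpret prob_space M by (rule P)
  show "?D \<subseteq> borel_measurable M" by blast
  fix h assume h: "h \<in> borel_measurable M - ?D"
  then have hm[measurable]: "h \<in> borel_measurable M" by blast
  have notAE: "\<not> (AE x in M. x \<in> A \<longrightarrow> \<phi> x \<le> c * h x)" using h by blast
  define E where "E k = {x\<in>space M. x \<in> A \<and> c * h x + inverse (real (Suc k)) < \<phi> x}" for k
  have Em: "E k \<in> sets M" for k unfolding E_def using A by measurable
  have "\<exists>k. measure M (E k) \<noteq> 0"
  proof (rule ccontr)
    assume "\<not> (\<exists>k. measure M (E k) \<noteq> 0)"
    then have "\<forall>k. AE x in M. \<not> (x \<in> A \<and> c * h x + inverse (real (Suc k)) < \<phi> x)"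
      by (intro allI, subst AE_iff_measurable[OF Em[of k]]) (auto simp: E_def emeasure_eq_measure)
    then have "AE x in M. \<forall>k. \<not> (x \<in> A \<and> c * h x + inverse (real (Suc k)) < \<phi> x)"
      by (rule AE_all_countable[THEN iffD2])
    then have "AE x in M. x \<in> A \<longrightarrow> \<phi> x \<le> c * h x"
    proof (rule eventually_mono)
      fix x assume H: "\<forall>k. \<not> (x \<in> A \<and> c * h x + inverse (real (Suc k)) < \<phi> x)"
      show "x \<in> A \<longrightarrow> \<phi> x \<le> c * h x"
      proof
        assume xA: "x \<in> A"
        show "\<phi> x \<le> c * h x"
        proof (rule ccontr)
          assume "\<not> \<phi> x \<le> c * h x"
          then have "0 < \<phi> x - c * h x" by simp
          then obtain k where "inverse (real (Suc k)) < \<phi> x - c * h x"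
            using reals_Archimedean by blast
          moreover have "\<not> (c * h x + inverse (real (Suc k)) < \<phi> x)" using H xA by blast
          ultimately show False by linarith
        qed
      qed
    qed
    then show False using notAE by blast
  qed
  then obtain k where k: "measure M (E k) \<noteq> 0" by blast
  then have kpos: "0 < measure M (E k)" using measure_nonneg[of M "E k"] by linarith
  show "\<exists>e>0. \<exists>d>0. \<forall>g\<in>borel_measurable M.
        measure M {x\<in>space M. e < \<bar>h x - g x\<bar>} < d \<longrightarrow> g \<notin> ?D"
  proof (intro exI conjI ballI impI)
    show "inverse (real (Suc k)) > 0" by simp
    show "measure M (E k) > 0" by (rule kpos)
    fix g assume gm[measurable]: "g \<in> borel_measurable M"
      and lt: "measure M {x\<in>space M. inverse (real (Suc k)) < \<bar>h x - g x\<bar>} < measure M (E k)"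
    show "g \<notin> ?D"
    proof
      assume "g \<in> ?D"
      then have ag: "AE x in M. x \<in> A \<longrightarrow> \<phi> x \<le> c * g x" by blast
      have "AE x in M. x \<in> E k \<longrightarrow> x \<in> {x\<in>space M. inverse (real (Suc k)) < \<bar>h x - g x\<bar>}"
        using ag
      proof (rule eventually_mono)
        fix x assume H: "x \<in> A \<longrightarrow> \<phi> x \<le> c * g x"
        show "x \<in> E k \<longrightarrow> x \<in> {x\<in>space M. inverse (real (Suc k)) < \<bar>h x - g x\<bar>}"
        proof
          assume "x \<in> E k"
          then have x: "x \<in> space M" "x \<in> A" "c * h x + inverse (real (Suc k)) < \<phi> x"
            by (auto simp: E_def)
          have "c * g x - c * h x \<le> \<bar>c * (g x - h x)\<bar>" by (simp add: right_diff_distrib)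
          also have "\<dots> = \<bar>h x - g x\<bar>" using c by (simp add: abs_mult abs_minus_commute)
          finally show "x \<in> {x\<in>space M. inverse (real (Suc k)) < \<bar>h x - g x\<bar>}"
            using x H by auto
        qed
      qed
      then have "measure M (E k) \<le> measure M {x\<in>space M. inverse (real (Suc k)) < \<bar>h x - g x\<bar>}"
        by (intro finite_measure_mono_AE) (auto)
      then show False using lt by linarith
    qed
  qed
qed

lemma real_comb_le:
  fixes p c t u v :: real
  assumes "0 \<le> t" "t \<le> 1" "p \<le> c * u" "p \<le> c * v"
  shows "p \<le> c * (t * u + (1 - t) * v)"
proof -
  have "t * p \<le> t * (c * u)" using assms by (intro mult_left_mono) auto
  moreover have "(1 - t) * p \<le> (1 - t) * (c * v)" using assms by (intro mult_left_mono) auto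
  ultimately have "t * p + (1 - t) * p \<le> t * (c * u) + (1 - t) * (c * v)" by linarith
  then show ?thesis by (simp add: algebra_simps)
qed

lemma convex_half:
  fixes M :: "'a measure" and \<phi> :: "'a \<Rightarrow> real"
  shows "L0_convex M {g \<in> borel_measurable M. AE x in M. x \<in> A \<longrightarrow> \<phi> x \<le> c * g x}"
  unfolding L0_convex_def
proof (intro ballI impI)
  fix u v \<xi> :: "'a \<Rightarrow> real"
  assume u: "u \<in> {g \<in> borel_measurable M. AE x in M. x \<in> A \<longrightarrow> \<phi> x \<le> c * g x}"
    and v: "v \<in> {g \<in> borel_measurable M. AE x in M. x \<in> A \<longrightarrow> \<phi> x \<le> c * g x}"
    and xi: "\<xi> \<in> borel_measurable M" and b: "AE w in M. 0 \<le> \<xi> w \<and> \<xi> w \<le> 1"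
  have [measurable]: "u \<in> borel_measurable M" "v \<in> borel_measurable M" "\<xi> \<in> borel_measurable M"
    using u v xi by auto
  have "(\<lambda>w. \<xi> w * u w + (1 - \<xi> w) * v w) \<in> borel_measurable M" by measurable
  moreover have "AE x in M. x \<in> A \<longrightarrow> \<phi> x \<le> c * (\<xi> x * u x + (1 - \<xi> x) * v x)"
  proof -
    have "AE x in M. (x \<in> A \<longrightarrow> \<phi> x \<le> c * u x) \<and> (x \<in> A \<longrightarrow> \<phi> x \<le> c * v x) \<and> (0 \<le> \<xi> x \<and> \<xi> x \<le> 1)"
      using u v b by (simp add: AE_conj_iff)
    then show ?thesis by (rule eventually_mono) (auto intro: real_comb_le)
  qed
  ultimately show "(\<lambda>w. \<xi> w * u w + (1 - \<xi> w) * v w)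
      \<in> {g \<in> borel_measurable M. AE x in M. x \<in> A \<longrightarrow> \<phi> x \<le> c * g x}" by blast
qed

lemma convex_Int: "L0_convex M A \<Longrightarrow> L0_convex M B \<Longrightarrow> L0_convex M (A \<inter> B)"
  unfolding L0_convex_def by blast

lemma arctan_abs_le: "norm (arctan y) \<le> pi / 2"
  using arctan_bounded[of y] by (simp only: real_norm_def abs_le_iff) linarith

lemma arctan_le2: "arctan y * 2 \<le> pi"
  using arctan_ubound[of y] by linarith

lemma bound_side:
  fixes M :: "'a measure" and G :: "('a \<Rightarrow> real) set" and c :: real
  assumes P: "prob_space M" and Gm: "G \<subseteq> borel_measurable M" and ne: "G \<noteq> {}"
    and cc: "L0_convexly_compact M G" and c: "\<bar>c\<bar> = 1"
  shows "\<exists>u\<in>G. \<forall>g\<in>G. AE x in M. c * g x \<le> c * u x"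
proof -
  interpret prob_space M by (rule P)
  have cv: "L0_convex M G" using cc unfolding L0_convexly_compact_def by blast
  define mx where "mx = (\<lambda>g1 g2 (x::'a). if c * g1 x \<le> c * g2 x then g2 x else (g1 x::real))"
  have mxG: "mx g1 g2 \<in> G" if g1: "g1 \<in> G" and g2: "g2 \<in> G" for g1 g2
  proof -
    have [measurable]: "g1 \<in> borel_measurable M" "g2 \<in> borel_measurable M" using g1 g2 Gm by auto
    let ?xi = "\<lambda>x. if c * g1 x \<le> c * g2 x then 1 else (0::real)"
    have xim: "?xi \<in> borel_measurable M" by measurable
    have ae: "AE w in M. 0 \<le> ?xi w \<and> ?xi w \<le> 1" by simp
    have inst: "\<forall>\<xi>\<in>borel_measurable M. (AE w in M. 0 \<le> \<xi> w \<and> \<xi> w \<le> 1) \<longrightarrow>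
       (\<lambda>w. \<xi> w * g2 w + (1 - \<xi> w) * g1 w) \<in> G"
      using cv g1 g2 unfolding L0_convex_def by blast
    have "(\<lambda>w. ?xi w * g2 w + (1 - ?xi w) * g1 w) \<in> G"
      by (rule inst[rule_format, OF xim ae])
    moreover have "(\<lambda>w. ?xi w * g2 w + (1 - ?xi w) * g1 w) = mx g1 g2"
      by (auto simp: mx_def fun_eq_iff)
    ultimately show ?thesis by simp
  qed
  have mx_ge1: "c * g1 x \<le> c * mx g1 g2 x" for g1 g2 x by (auto simp: mx_def)
  have mx_ge2: "c * g2 x \<le> c * mx g1 g2 x" for g1 g2 x by (auto simp: mx_def)
  define \<Phi> where "\<Phi> g = integral\<^sup>L M (\<lambda>x. arctan (c * g x))" for g :: "'a \<Rightarrow> real"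
  have intg: "integrable M (\<lambda>x. arctan (c * g x))" if "g \<in> G" for g
  proof -
    have [measurable]: "g \<in> borel_measurable M" using that Gm by auto
    show ?thesis by (rule integrable_const_bound[where B="pi/2"]) (simp_all only: arctan_abs_le AE_I2, measurable)
  qed
  have Phibd: "\<Phi> g \<le> pi / 2" if "g \<in> G" for g
  proof -
    have "\<Phi> g \<le> integral\<^sup>L M (\<lambda>x. pi / 2)"
      unfolding \<Phi>_def using intg[OF that]
      by (intro integral_mono) (auto simp: arctan_le2 less_imp_le[OF arctan_ubound])
    then show ?thesis by (simp add: prob_space)
  qed
  define S where "S = Sup (\<Phi> ` G)"
  have bdd: "bdd_above (\<Phi> ` G)" unfolding bdd_above_def using Phibd by blast
  have upper: "\<Phi> g \<le> S" if "g \<in> G" for g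
    unfolding S_def using bdd that by (auto intro: cSup_upper)
  have "\<forall>n. \<exists>g\<in>G. S - inverse (real (Suc n)) < \<Phi> g"
  proof
    fix n
    have "S - inverse (real (Suc n)) < Sup (\<Phi> ` G)" unfolding S_def by simp
    then show "\<exists>g\<in>G. S - inverse (real (Suc n)) < \<Phi> g"
      using less_cSup_iff[OF _ bdd] ne by auto
  qed
  then obtain gs where gs: "\<And>n. gs n \<in> G" "\<And>n. S - inverse (real (Suc n)) < \<Phi> (gs n)"
    by metis
  define h where "h = rec_nat (gs 0) (\<lambda>n hn. mx hn (gs (Suc n)))"
  have h0: "h 0 = gs 0" and hS: "h (Suc n) = mx (h n) (gs (Suc n))" for n
    by (simp_all add: h_def)
  have hG: "h n \<in> G" for n
    by (induction n) (simp_all add: h0 hS gs mxG)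
  have hmono: "c * h n x \<le> c * h m x" if "n \<le> m" for n m x
  proof -
    have "\<forall>k. c * h k x \<le> c * h (Suc k) x" using mx_ge1 by (simp add: hS)
    then show ?thesis using lift_Suc_mono_le[of "\<lambda>k. c * h k x"] that by blast
  qed
  have hgs: "c * gs n x \<le> c * h n x" for n x
    by (cases n) (simp_all add: h0 hS mx_ge2)
  define D where "D n = {g \<in> borel_measurable M. AE x in M. x \<in> space M \<longrightarrow> c * h n x \<le> c * g x}" for n
  define C where "C n = G \<inter> D n" for n
  have hm[measurable]: "h n \<in> borel_measurable M" for n using hG Gm by auto
  have Cprop: "\<forall>C'\<in>range C. C' \<subseteq> G \<and> L0_convex M C' \<and> closedin (subtopology (L0_top M) G) C'"
  proof
    fix C' assume "C' \<in> range C"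
    then obtain n where n: "C' = C n" by blast
    have cl: "closedin (L0_top M) (D n)" unfolding D_def
      by (rule closed_half[OF P]) (auto simp: c)
    show "C' \<subseteq> G \<and> L0_convex M C' \<and> closedin (subtopology (L0_top M) G) C'"
      unfolding n C_def
    proof (intro conjI)
      show "L0_convex M (G \<inter> D n)" unfolding D_def by (intro convex_Int cv convex_half)
      show "closedin (subtopology (L0_top M) G) (G \<inter> D n)"
        using cl by (metis closedin_subtopology_Int_closed)
    qed blast
  qed
  have fip: "\<forall>\<G>. \<G> \<subseteq> range C \<and> finite \<G> \<and> \<G> \<noteq> {} \<longrightarrow> \<Inter>\<G> \<noteq> {}"
  proof (intro allI impI)
    fix \<G> assume H: "\<G> \<subseteq> range C \<and> finite \<G> \<and> \<G> \<noteq> {}"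
    then obtain N where N: "finite N" "\<G> = C ` N" using finite_subset_image[of \<G> C UNIV] by blast
    then have Nne: "N \<noteq> {}" using H by blast
    have "h (Max N) \<in> C n" if "n \<in> N" for n
    proof -
      have "n \<le> Max N" using N that by simp
      then show ?thesis unfolding C_def D_def using hG Gm hmono by auto
    qed
    then show "\<Inter>\<G> \<noteq> {}" using N by blast
  qed
  have "\<Inter>(range C) \<noteq> {}" using cc Cprop fip unfolding L0_convexly_compact_def by blast
  then obtain u where u: "\<And>n. u \<in> C n" by blast
  have uG: "u \<in> G" using u[of 0] by (simp add: C_def)
  have uge: "AE x in M. c * h n x \<le> c * u x" for n
    using u[of n] by (auto simp: C_def D_def elim: AE_mp)
  have "\<Phi> (gs n) \<le> \<Phi> u" for n
    unfolding \<Phi>_def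
  proof (rule integral_mono_AE[OF intg[OF gs(1)] intg[OF uG]])
    show "AE x in M. arctan (c * gs n x) \<le> arctan (c * u x)"
      using uge[of n] by (rule eventually_mono) (use hgs in \<open>auto simp: arctan_le_iff intro: order_trans\<close>)
  qed
  then have Su: "S \<le> \<Phi> u"
  proof -
    assume H: "\<And>n. \<Phi> (gs n) \<le> \<Phi> u"
    show "S \<le> \<Phi> u"
    proof (rule ccontr)
      assume "\<not> S \<le> \<Phi> u"
      then have "0 < S - \<Phi> u" by simp
      then obtain n where "inverse (real (Suc n)) < S - \<Phi> u" using reals_Archimedean by blast
      then show False using gs(2)[of n] H[of n] by linarith
    qed
  qed
  show ?thesis
  proof (intro bexI[OF _ uG] ballI)
    fix g assume gG: "g \<in> G"
    have [measurable]: "g \<in> borel_measurable M" "u \<in> borel_measurable M" using gG uG Gm by auto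
    show "AE x in M. c * g x \<le> c * u x"
    proof (rule ccontr)
      assume nae: "\<not> (AE x in M. c * g x \<le> c * u x)"
      define A where "A = {x\<in>space M. c * u x < c * g x}"
      have Am: "A \<in> sets M" unfolding A_def by measurable
      have "emeasure M A \<noteq> 0"
        using nae AE_iff_measurable[OF Am, of "\<lambda>x. c * g x \<le> c * u x"] by (auto simp: A_def not_le)
      have "\<Phi> u < \<Phi> (mx u g)"
        unfolding \<Phi>_def
      proof (rule integral_less_AE[OF intg[OF uG] intg[OF mxG[OF uG gG]] \<open>emeasure M A \<noteq> 0\<close> Am])
        show "AE x in M. x \<in> A \<longrightarrow> arctan (c * u x) \<noteq> arctan (c * mx u g x)"
          by (auto simp: A_def mx_def arctan_eq_iff)
        show "AE x in M. arctan (c * u x) \<le> arctan (c * mx u g x)"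
          by (auto simp: arctan_le_iff mx_ge1)
      qed
      moreover have "\<Phi> (mx u g) \<le> S" using upper mxG[OF uG gG] by blast
      ultimately show False using Su by linarith
    qed
  qed
qed

lemma small_eq0:
  fixes a :: real
  assumes "\<forall>n\<ge>N. \<bar>a\<bar> \<le> inverse (real (Suc n))"
  shows "a = 0"
proof (rule ccontr)
  assume "a \<noteq> 0"
  then have "0 < \<bar>a\<bar>" by simp
  then obtain n0 where n0: "inverse (real (Suc n0)) < \<bar>a\<bar>" using reals_Archimedean by blast
  have "inverse (real (Suc (max N n0))) \<le> inverse (real (Suc n0))"
    by (rule le_imp_inverse_le) auto
  moreover have "\<bar>a\<bar> \<le> inverse (real (Suc (max N n0)))" using assms by simp
  ultimately show False using n0 by linarith
qed

lemma closed_G: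
  fixes M :: "'a measure" and G :: "('a \<Rightarrow> real) set"
  assumes P: "prob_space M" and sat: "L0_saturated M G" and cc: "L0_convexly_compact M G"
  shows "closedin (L0_top M) G"
proof -
  interpret prob_space M by (rule P)
  have Gm: "G \<subseteq> borel_measurable M" using sat unfolding L0_saturated_def by blast
  have cv: "L0_convex M G" using cc unfolding L0_convexly_compact_def by blast
  show ?thesis unfolding closedin_L0[OF P]
  proof (intro conjI ballI Gm)
    fix f assume f: "f \<in> borel_measurable M - G"
    have fm[measurable]: "f \<in> borel_measurable M" using f by blast
    show "\<exists>e>0. \<exists>d>0. \<forall>g\<in>borel_measurable M.
        measure M {x\<in>space M. e < \<bar>f x - g x\<bar>} < d \<longrightarrow> g \<notin> G"
    proof (rule ccontr)
      assume "\<not> ?thesis"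
      then have approx: "\<forall>e>0. \<forall>d>0. \<exists>g\<in>G. measure M {x\<in>space M. e < \<bar>f x - g x\<bar>} < d"
        using Gm by blast
      have "\<forall>n. \<exists>g\<in>G. measure M {x\<in>space M. inverse (real (Suc n)) < \<bar>f x - g x\<bar>} < (1/2)^n"
        using approx by simp
      then obtain gs where gsG: "\<And>n. gs n \<in> G"
        and gsm: "\<And>n. measure M {x\<in>space M. inverse (real (Suc n)) < \<bar>f x - gs n x\<bar>} < (1/2)^n"
        by metis
      have gsb[measurable]: "gs n \<in> borel_measurable M" for n using gsG Gm by auto
      define B where "B n = {x\<in>space M. inverse (real (Suc n)) < \<bar>f x - gs n x\<bar>}" for n
      have Bm[measurable]: "B n \<in> sets M" for n unfolding B_def by measurable
      have "summable (\<lambda>n. measure M (B n))"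
      proof (rule summable_comparison_test)
        show "\<exists>N. \<forall>n\<ge>N. norm (measure M (B n)) \<le> (1/2)^n"
          using gsm by (auto simp: B_def less_imp_le)
        show "summable (\<lambda>n. (1/2::real)^n)" by (rule summable_geometric) simp
      qed
      then have BC: "AE x in M. eventually (\<lambda>n. x \<in> space M - B n) sequentially"
        by (intro borel_cantelli_AE1) (auto simp: emeasure_eq_measure)
      define A where "A n = space M - (\<Union>m\<in>{n..}. B m)" for n
      have Am: "A n \<in> sets M" for n unfolding A_def by auto
      have Amono: "A n \<subseteq> A m" if "n \<le> m" for n m
        using that unfolding A_def by auto
      define r where "r n = inverse (real (Suc n))" for n
      have rmono: "r m \<le> r n" if "n \<le> m" for n m
        unfolding r_def using that by (intro le_imp_inverse_le) auto
      define D1 where "D1 n = {g \<in> borel_measurable M. AE x in M. x \<in> A n \<longrightarrow> f x - r n \<le> 1 * g x}" for n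
      define D2 where "D2 n = {g \<in> borel_measurable M. AE x in M. x \<in> A n \<longrightarrow> - (f x + r n) \<le> (-1) * g x}" for n
      define C where "C n = G \<inter> (D1 n \<inter> D2 n)" for n
      have Cprop: "\<forall>C'\<in>range C. C' \<subseteq> G \<and> L0_convex M C' \<and> closedin (subtopology (L0_top M) G) C'"
      proof
        fix C' assume "C' \<in> range C"
        then obtain n where n: "C' = C n" by blast
        have cl1: "closedin (L0_top M) (D1 n)" unfolding D1_def
          by (rule closed_half[OF P Am]) auto
        have cl2: "closedin (L0_top M) (D2 n)" unfolding D2_def
          by (rule closed_half[OF P Am]) auto
        show "C' \<subseteq> G \<and> L0_convex M C' \<and> closedin (subtopology (L0_top M) G) C'"
          unfolding n C_def
        proof (intro conjI)
          show "L0_convex M (G \<inter> (D1 n \<inter> D2 n))" unfolding D1_def D2_def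
            by (intro convex_Int cv convex_half)
          show "closedin (subtopology (L0_top M) G) (G \<inter> (D1 n \<inter> D2 n))"
            using cl1 cl2 by (metis closedin_Int closedin_subtopology_Int_closed)
        qed blast
      qed
      have gsC: "gs n \<in> C n" for n
      proof -
        have "x \<in> A n \<Longrightarrow> \<bar>f x - gs n x\<bar> \<le> r n" for x
          unfolding A_def B_def r_def by (auto simp: not_less)
        then show ?thesis unfolding C_def D1_def D2_def using gsG
          by (auto intro!: AE_I2 simp: abs_le_iff) (smt (verit))+
      qed
      have Cmono: "C m \<subseteq> C n" if "n \<le> m" for n m
      proof
        fix g assume g: "g \<in> C m"
        have "AE x in M. x \<in> A n \<longrightarrow> f x - r n \<le> 1 * g x"
          using g unfolding C_def D1_def
          by (auto elim!: eventually_mono dest: subsetD[OF Amono[OF that]]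
              intro: order_trans[OF diff_left_mono[OF rmono[OF that]]])
        moreover have "AE x in M. x \<in> A n \<longrightarrow> - (f x + r n) \<le> (-1) * g x"
        proof -
          have "AE x in M. x \<in> A m \<longrightarrow> - (f x + r m) \<le> (-1) * g x"
            using g unfolding C_def D2_def by blast
          then show ?thesis
          proof (rule eventually_mono)
            fix x assume H: "x \<in> A m \<longrightarrow> - (f x + r m) \<le> (-1) * g x"
            show "x \<in> A n \<longrightarrow> - (f x + r n) \<le> (-1) * g x"
            proof
              assume "x \<in> A n"
              then have "x \<in> A m" using Amono[OF that] by blast
              then show "- (f x + r n) \<le> (-1) * g x" using H rmono[OF that] by linarith
            qed
          qed
        qed
        ultimately show "g \<in> C n" using g unfolding C_def D1_def D2_def by blast
      qed
      have fip: "\<forall>\<G>. \<G> \<subseteq> range C \<and> finite \<G> \<and> \<G> \<noteq> {} \<longrightarrow> \<Inter>\<G> \<noteq> {}"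
      proof (intro allI impI)
        fix \<G> assume H: "\<G> \<subseteq> range C \<and> finite \<G> \<and> \<G> \<noteq> {}"
        then obtain N where N: "finite N" "\<G> = C ` N" using finite_subset_image[of \<G> C UNIV] by blast
        have "gs (Max N) \<in> C n" if "n \<in> N" for n
          using Cmono[of n "Max N"] gsC[of "Max N"] N that by auto
        then show "\<Inter>\<G> \<noteq> {}" using N by blast
      qed
      have "\<Inter>(range C) \<noteq> {}" using cc Cprop fip unfolding L0_convexly_compact_def by blast
      then obtain u where u: "\<And>n. u \<in> C n" by blast
      have uG: "u \<in> G" using u[of 0] by (simp add: C_def)
      have "\<forall>n. AE x in M. (x \<in> A n \<longrightarrow> f x - r n \<le> 1 * u x) \<and> (x \<in> A n \<longrightarrow> - (f x + r n) \<le> (-1) * u x)"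
        using u unfolding C_def D1_def D2_def by (simp add: AE_conj_iff)
      then have "AE x in M. \<forall>n. (x \<in> A n \<longrightarrow> f x - r n \<le> 1 * u x) \<and> (x \<in> A n \<longrightarrow> - (f x + r n) \<le> (-1) * u x)"
        by (rule AE_all_countable[THEN iffD2])
      then have "AE x in M. u x = f x"
        using BC
      proof (eventually_elim)
        case (elim x)
        then obtain N where N: "\<forall>n\<ge>N. x \<in> space M - B n"
          by (auto simp: eventually_sequentially)
        then have xAN: "x \<in> A N" unfolding A_def by auto
        have "\<forall>n\<ge>N. \<bar>u x - f x\<bar> \<le> inverse (real (Suc n))"
        proof (intro allI impI)
          fix n assume "N \<le> n"
          then have "x \<in> A n" using xAN Amono by blast
          then have "f x - r n \<le> 1 * u x" "- (f x + r n) \<le> (-1) * u x" using elim(1) by blast+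
          then have "\<bar>u x - f x\<bar> \<le> r n" by linarith
          then show "\<bar>u x - f x\<bar> \<le> inverse (real (Suc n))" by (simp only: r_def)
        qed
        then have "u x - f x = 0" by (rule small_eq0)
        then show ?case by simp
      qed
      then have "f \<in> G" using sat uG fm unfolding L0_saturated_def by blast
      then show False using f by blast
    qed
  qed
qed

theorem proposition3p2:
  fixes M :: "'a measure" and G :: "('a \<Rightarrow> real) set"
  assumes "prob_space M"
    and "L0_saturated M G"
    and "G \<noteq> {}"
    and "L0_convex M G"
    and "L0_convexly_compact M G"
  shows "(\<exists>\<xi>\<in>borel_measurable M. (\<forall>w. 0 \<le> \<xi> w) \<and>
            (\<forall>g\<in>G. AE w in M. \<bar>g w\<bar> \<le> \<xi> w))
         \<and> closedin (L0_top M) G"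
proof
  have Gm: "G \<subseteq> borel_measurable M" using assms(2) unfolding L0_saturated_def by blast
  obtain u1 where u1: "u1 \<in> G" "\<forall>g\<in>G. AE x in M. 1 * g x \<le> 1 * u1 x"
    using bound_side[OF assms(1) Gm assms(3) assms(5), of 1] by auto
  obtain u2 where u2: "u2 \<in> G" "\<forall>g\<in>G. AE x in M. (-1) * g x \<le> (-1) * u2 x"
    using bound_side[OF assms(1) Gm assms(3) assms(5), of "-1"] by auto
  have [measurable]: "u1 \<in> borel_measurable M" "u2 \<in> borel_measurable M" using u1 u2 Gm by auto
  show "\<exists>\<xi>\<in>borel_measurable M. (\<forall>w. 0 \<le> \<xi> w) \<and> (\<forall>g\<in>G. AE w in M. \<bar>g w\<bar> \<le> \<xi> w)"
  proof (intro bexI[of _ "\<lambda>w. \<bar>u1 w\<bar> + \<bar>u2 w\<bar>"] conjI allI ballI)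
    show "(\<lambda>w. \<bar>u1 w\<bar> + \<bar>u2 w\<bar>) \<in> borel_measurable M" by measurable
    show "0 \<le> \<bar>u1 w\<bar> + \<bar>u2 w\<bar>" for w by simp
    fix g assume g: "g \<in> G"
    have "AE x in M. 1 * g x \<le> 1 * u1 x" "AE x in M. (-1) * g x \<le> (-1) * u2 x" using u1 u2 g by auto
    then show "AE w in M. \<bar>g w\<bar> \<le> \<bar>u1 w\<bar> + \<bar>u2 w\<bar>"
      by eventually_elim (auto simp: abs_le_iff)
  qed
  show "closedin (L0_top M) G" by (rule closed_G[OF assms(1,2,5)])
qed

end
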